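(* Let $X$ be a CRSM on $E$ with extremal coefficient functional $\theta$. Then for all $K_1,K_2\in\mathcal K$ and $\varepsilon>0$, $$\mathbb P\{X(K_1)-X(K_2)\le\varepsilon\}\ge\exp\Big\{-\frac1\varepsilon\big(\theta(K_1\cup K_2)-\theta(K_2)\big)\Big\},$$ and consequently $$\mathbb P\{|X(K_1)-X(K_2)|>\varepsilon\}\le\frac1\varepsilon\big(2\theta(K_1\cup K_2)-\theta(K_1)-\theta(K_2)\big).$$
   Context: $E$ is a locally compact Hausdorff second countable space; $\mathcal K$ its compact subsets. A sup-measure on $E$ is a Choquet capacity $\varphi$ (non-decreasing, $\varphi(\emptyset)=0$, $\varphi(A_n)\uparrow\varphi(A)$ if $A_n\uparrow A$, $\varphi(K_n)\downarrow\varphi(K)$ for compact $K_n\downarrow K$), finite on compacts, with $\varphi(\bigcup_j G_j)=\sup_j\varphi(G_j)$ for all families of open sets; a random sup-measure is a random element of the space of sup-measures (Borel $\sigma$-algebra of the sup-vague topology). $\mathrm{USC}$: bounded non-negative upper semicontinuous functions with relatively compact support. Extremal integral $\int^e f\,d\varphi=\sup\{\varphi(K)\inf_{x\in K}f(x):K\in\mathcal K\}$. Unit Fréchet with scale $a\ge0$: distribution function $\exp(-a/t)$, $t>0$. $X$ is max-stable if $\bigvee_iu_iX(K_i)$ is unit Fréchet for all $K_i\in\mathcal K$, $u_i\ge0$; tail dependence functional $\ell(f)$ = scale of $\int^e f\,dX$; extremal coefficient functional $\theta(K)=\ell(\mathbf 1_K)$. $X$ is a CRSM if it is max-stable and $\ell(f+g)=\ell(f)+\ell(g)$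 for all $f,g\in\mathrm{USC}$ with $(f(x)-f(y))(g(x)-g(y))\ge0$ for all $x,y$. *)

theory Defs
  imports "HOL-Analysis.Analysis" "HOL-Probability.Probability"
begin

definition choquet_capacity :: "('a::topological_space set \<Rightarrow> ennreal) \<Rightarrow> bool" where
  "choquet_capacity \<phi> \<longleftrightarrow>
     mono \<phi> \<and> \<phi> {} = 0 \<and>
     (\<forall>A::nat \<Rightarrow> 'a set. incseq A \<longrightarrow> (\<lambda>n. \<phi> (A n)) \<longlonglongrightarrow> \<phi> (\<Union>n. A n)) \<and>
     (\<forall>K::nat \<Rightarrow> 'a set. decseq K \<longrightarrow> (\<forall>n. compact (K n)) \<longrightarrow>
        (\<lambda>n. \<phi> (K n)) \<longlonglongrightarrow> \<phi> (\<Inter>n. K n))"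

definition sup_measure :: "('a::topological_space set \<Rightarrow> ennreal) \<Rightarrow> bool" where
  "sup_measure \<phi> \<longleftrightarrow>
     choquet_capacity \<phi> \<and>
     (\<forall>K. compact K \<longrightarrow> \<phi> K < \<infinity>) \<and>
     (\<forall>\<G>. (\<forall>G\<in>\<G>. open G) \<longrightarrow> \<phi> (\<Union>\<G>) = (SUP G\<in>\<G>. \<phi> G))"

definition sup_vague_topology :: "('a::topological_space set \<Rightarrow> ennreal) topology" where
  "sup_vague_topology = topology_generated_by
     ({{\<phi>. sup_measure \<phi> \<and> \<phi> K < t} | K t. compact K} \<union>
      {{\<phi>. sup_measure \<phi> \<and> \<phi> G > t} | G t. open G})"

definition sup_measure_space :: "('a::topological_space set \<Rightarrow> ennreal) measure" where
  "sup_measure_space = sigma {\<phi>. sup_measure \<phi>} {U. openin sup_vague_topology U}"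

definition random_sup_measure ::
    "'w measure \<Rightarrow> ('w \<Rightarrow> 'a::topological_space set \<Rightarrow> ennreal) \<Rightarrow> bool" where
  "random_sup_measure M X \<longleftrightarrow> prob_space M \<and> X \<in> measurable M sup_measure_space"

definition unit_frechet_scale :: "'w measure \<Rightarrow> ('w \<Rightarrow> ennreal) \<Rightarrow> real \<Rightarrow> bool" where
  "unit_frechet_scale M Y a \<longleftrightarrow>
     a \<ge> 0 \<and> (\<forall>t::real. t > 0 \<longrightarrow> measure M {\<omega>\<in>space M. Y \<omega> \<le> ennreal t} = exp (- a / t))"

definition unit_frechet :: "'w measure \<Rightarrow> ('w \<Rightarrow> ennreal) \<Rightarrow> bool" where
  "unit_frechet M Y \<longleftrightarrow> (\<exists>a. unit_frechet_scale M Y a)"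

definition frechet_scale :: "'w measure \<Rightarrow> ('w \<Rightarrow> ennreal) \<Rightarrow> real" where
  "frechet_scale M Y = (THE a. unit_frechet_scale M Y a)"

definition max_stable :: "'w measure \<Rightarrow> ('w \<Rightarrow> 'a::topological_space set \<Rightarrow> ennreal) \<Rightarrow> bool" where
  "max_stable M X \<longleftrightarrow> random_sup_measure M X \<and>
     (\<forall>(I::nat set) (K::nat \<Rightarrow> 'a set) (u::nat \<Rightarrow> real).
        finite I \<longrightarrow> (\<forall>i\<in>I. compact (K i) \<and> u i \<ge> 0) \<longrightarrow>
        unit_frechet M (\<lambda>\<omega>. SUP i\<in>I. ennreal (u i) * X \<omega> (K i)))"

definition usc_fun :: "('a::topological_space \<Rightarrow> real) \<Rightarrow> bool" where
  "usc_fun f \<longleftrightarrow>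
     (\<forall>x. f x \<ge> 0) \<and> bounded (range f) \<and>
     (\<forall>t. open {x. f x < t}) \<and> compact (closure {x. f x \<noteq> 0})"

definition extremal_integral :: "('a::topological_space \<Rightarrow> real) \<Rightarrow> ('a set \<Rightarrow> ennreal) \<Rightarrow> ennreal" where
  "extremal_integral f \<phi> = (SUP K\<in>{K. compact K}. \<phi> K * (INF x\<in>K. ennreal (f x)))"

definition tail_dep :: "'w measure \<Rightarrow> ('w \<Rightarrow> 'a::topological_space set \<Rightarrow> ennreal) \<Rightarrow> ('a \<Rightarrow> real) \<Rightarrow> real" where
  "tail_dep M X f = frechet_scale M (\<lambda>\<omega>. extremal_integral f (X \<omega>))"

definition ext_coeff :: "'w measure \<Rightarrow> ('w \<Rightarrow> 'a::topological_space set \<Rightarrow> ennreal) \<Rightarrow> 'a set \<Rightarrow> real" where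
  "ext_coeff M X K = tail_dep M X (indicator K)"

definition comonotone :: "('a \<Rightarrow> real) \<Rightarrow> ('a \<Rightarrow> real) \<Rightarrow> bool" where
  "comonotone f g \<longleftrightarrow> (\<forall>x y. (f x - f y) * (g x - g y) \<ge> 0)"

definition CRSM :: "'w measure \<Rightarrow> ('w \<Rightarrow> 'a::topological_space set \<Rightarrow> ennreal) \<Rightarrow> bool" where
  "CRSM M X \<longleftrightarrow> max_stable M X \<and>
     (\<forall>f g. usc_fun f \<longrightarrow> usc_fun g \<longrightarrow> comonotone f g \<longrightarrow>
        tail_dep M X (\<lambda>x. f x + g x) = tail_dep M X f + tail_dep M X g)"

end

theory Submission
  imports Defs
begin

lemma svt_sub: "openin sup_vague_topology U \<Longrightarrow> U \<subseteq> {\<phi>. sup_measure \<phi>}"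
proof -
  assume "openin sup_vague_topology U"
  then have "U \<subseteq> topspace sup_vague_topology" by (rule openin_subset)
  also have "\<dots> \<subseteq> {\<phi>. sup_measure \<phi>}" unfolding sup_vague_topology_def
    by (subst topology_generated_by_topspace) auto
  finally show ?thesis .
qed

lemma sms_space: "space sup_measure_space = {\<phi>. sup_measure \<phi>}"
  unfolding sup_measure_space_def
  by (rule space_measure_of) (use svt_sub in auto)

lemma sms_sets:
  assumes "compact K"
  shows "{\<phi>. sup_measure \<phi> \<and> \<phi> K < t} \<in> sets sup_measure_space"
proof -
  have "openin sup_vague_topology {\<phi>. sup_measure \<phi> \<and> \<phi> K < t}"
    unfolding sup_vague_topology_def by (rule topology_generated_by_Basis) (use assms in blast)
  moreover have "{U. openin sup_vague_topology U} \<subseteq> Pow {\<phi>. sup_measure \<phi>}"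
    by (use svt_sub in auto)
  ultimately show ?thesis unfolding sup_measure_space_def
    by (subst sets_measure_of) (auto simp: Collect_mono_iff intro!: sigma_sets.Basic)
qed

lemma rsm_sup:
  assumes "random_sup_measure M X" "\<omega> \<in> space M"
  shows "sup_measure (X \<omega>)"
  using assms measurable_space[of X M sup_measure_space \<omega>] sms_space
  unfolding random_sup_measure_def by auto

lemma rsm_meas:
  assumes "random_sup_measure M X" "compact K"
  shows "(\<lambda>\<omega>. X \<omega> K) \<in> borel_measurable M"
proof (rule borel_measurableI_less)
  fix y
  have "{\<omega>\<in>space M. X \<omega> K < y} = X -` {\<phi>. sup_measure \<phi> \<and> \<phi> K < y} \<inter> space M"
    using rsm_sup[OF assms(1)] by auto
  also have "\<dots> \<in> sets M"
    using assms sms_sets[OF assms(2)] unfolding random_sup_measure_def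
    using measurable_sets[of X M sup_measure_space "{\<phi>. sup_measure \<phi> \<and> \<phi> K < y}"]
    by (simp add: vimage_def)
  finally show "{\<omega>\<in>space M. X \<omega> K < y} \<in> sets M" .
qed

lemma ennreal_mult_le_iff_div:
  assumes "c > 0" "t > 0"
  shows "ennreal c * y \<le> ennreal t \<longleftrightarrow> y \<le> ennreal (t / c)"
proof (cases y)
  case (real r)
  then show ?thesis using assms
    by (simp add: ennreal_mult[symmetric] ennreal_le_iff2 field_simps)
next
  case top
  then show ?thesis using assms by (simp add: ennreal_mult_top top_unique)
qed

lemma ufs_unique: "unit_frechet_scale M Y a \<Longrightarrow> unit_frechet_scale M Y b \<Longrightarrow> a = b"
proof -
  assume "unit_frechet_scale M Y a" "unit_frechet_scale M Y b"
  then have "exp (- a / 1) = exp (- b / 1)" unfolding unit_frechet_scale_def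
    by (metis zero_less_one)
  then show "a = b" by simp
qed

lemma ufs_cong: "unit_frechet_scale M Y a \<Longrightarrow> (\<And>\<omega>. \<omega> \<in> space M \<Longrightarrow> Y' \<omega> = Y \<omega>)
   \<Longrightarrow> unit_frechet_scale M Y' a"
proof -
  assume a: "unit_frechet_scale M Y a" and e: "\<And>\<omega>. \<omega> \<in> space M \<Longrightarrow> Y' \<omega> = Y \<omega>"
  have "\<And>t. {\<omega>\<in>space M. Y' \<omega> \<le> ennreal t} = {\<omega>\<in>space M. Y \<omega> \<le> ennreal t}" using e by auto
  then show ?thesis using a unfolding unit_frechet_scale_def by simp
qed

lemma fs_eq: "unit_frechet_scale M Y a \<Longrightarrow> (\<And>\<omega>. \<omega> \<in> space M \<Longrightarrow> Y' \<omega> = Y \<omega>)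
   \<Longrightarrow> frechet_scale M Y' = a"
  unfolding frechet_scale_def using ufs_cong ufs_unique by (metis (no_types, lifting) the_equality)

lemma uf_scale: "unit_frechet M Y \<Longrightarrow> unit_frechet_scale M Y (frechet_scale M Y)"
  unfolding unit_frechet_def using fs_eq by blast

lemma ufs_mult:
  assumes "c > 0" "unit_frechet_scale M Y a"
  shows "unit_frechet_scale M (\<lambda>\<omega>. ennreal c * Y \<omega>) (c * a)"
  unfolding unit_frechet_scale_def
proof (intro conjI allI impI)
  show "0 \<le> c * a" using assms unfolding unit_frechet_scale_def by simp
  fix t :: real assume t: "t > 0"
  have "{\<omega>\<in>space M. ennreal c * Y \<omega> \<le> ennreal t} = {\<omega>\<in>space M. Y \<omega> \<le> ennreal (t / c)}"
    using ennreal_mult_le_iff_div[OF assms(1) t] by auto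
  also have "measure M \<dots> = exp (- a / (t / c))"
    using assms t unfolding unit_frechet_scale_def by simp
  finally show "measure M {\<omega>\<in>space M. ennreal c * Y \<omega> \<le> ennreal t} = exp (- (c * a) / t)"
    using assms by simp
qed

lemma ext_int_two:
  fixes A B :: "'a::topological_space set"
  assumes mono: "mono \<phi>" and e: "\<phi> {} = 0" and AB: "A \<subseteq> B" "compact A" "compact B"
    and ab: "a \<ge> 0" "b \<ge> 0"
  shows "extremal_integral (\<lambda>x. a * indicator A x + b * indicator B x) \<phi>
     = max (\<phi> A * ennreal (a + b)) (\<phi> B * ennreal b)"
  (is "extremal_integral ?h \<phi> = ?R")
proof (rule antisym)
  show "extremal_integral ?h \<phi> \<le> ?R"
    unfolding extremal_integral_def
  proof (rule SUP_least)
    fix K :: "'a set" assume K: "K \<in> {K. compact K}"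
    show "\<phi> K * (INF x\<in>K. ennreal (?h x)) \<le> ?R"
    proof (cases "K = {}")
      case True then show ?thesis using e by simp
    next
      case False
      show ?thesis
      proof (cases "K \<subseteq> A")
        case True
        then obtain x where x: "x \<in> K" "x \<in> A" "x \<in> B" using False AB by blast
        have "\<phi> K * (INF x\<in>K. ennreal (?h x)) \<le> \<phi> A * ennreal (?h x)"
          using x True mono INF_lower[OF x(1), of "\<lambda>x. ennreal (?h x)"] by (intro mult_mono) (auto simp: mono_def simp del: ennreal_plus)
        also have "\<dots> = \<phi> A * ennreal (a + b)" using x by simp
        finally show ?thesis by (simp add: le_max_iff_disj del: ennreal_plus)
      next
        case nA: False
        show ?thesis
        proof (cases "K \<subseteq> B")
          case True
          then obtain x where x: "x \<in> K" "x \<notin> A" "x \<in> B" using nA by blast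
          have "\<phi> K * (INF x\<in>K. ennreal (?h x)) \<le> \<phi> B * ennreal (?h x)"
            using x True mono INF_lower[OF x(1), of "\<lambda>x. ennreal (?h x)"] by (intro mult_mono) (auto simp: mono_def simp del: ennreal_plus)
          also have "\<dots> = \<phi> B * ennreal b" using x by simp
          finally show ?thesis by (simp add: le_max_iff_disj del: ennreal_plus)
        next
          case False
          then obtain x where x: "x \<in> K" "x \<notin> A" "x \<notin> B" using AB by blast
          have "(INF x\<in>K. ennreal (?h x)) \<le> ennreal (?h x)" using x by (intro INF_lower)
          also have "\<dots> = 0" using x by simp
          finally show ?thesis by (simp add: le_max_iff_disj del: ennreal_plus)
        qed
      qed
    qed
  qed
next
  have hA: "ennreal (a + b) \<le> (INF x\<in>A. ennreal (?h x))"
    by (rule INF_greatest) (use AB in auto)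
  have hB: "ennreal b \<le> (INF x\<in>B. ennreal (?h x))"
    by (rule INF_greatest) (use AB ab in \<open>auto simp: indicator_def intro: ennreal_leI\<close>)
  have "\<phi> A * ennreal (a + b) \<le> extremal_integral ?h \<phi>"
    unfolding extremal_integral_def
    by (rule order_trans[OF mult_left_mono[OF hA]]) (use AB in \<open>auto intro: SUP_upper2\<close>)
  moreover have "\<phi> B * ennreal b \<le> extremal_integral ?h \<phi>"
    unfolding extremal_integral_def
    by (rule order_trans[OF mult_left_mono[OF hB]]) (use AB in \<open>auto intro: SUP_upper2\<close>)
  ultimately show "?R \<le> extremal_integral ?h \<phi>" by simp
qed

lemma ext_int_one:
  fixes A :: "'a::topological_space set"
  assumes mono: "mono \<phi>" and e: "\<phi> {} = 0" and A: "compact A" and a: "a \<ge> 0"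
  shows "extremal_integral (\<lambda>x. a * indicator A x) \<phi> = \<phi> A * ennreal a"
  using ext_int_two[OF mono e order_refl A A a order_refl] by simp

lemma ext_int_ind:
  fixes A :: "'a::topological_space set"
  assumes mono: "mono \<phi>" and e: "\<phi> {} = 0" and A: "compact A"
  shows "extremal_integral (indicator A) \<phi> = \<phi> A"
  using ext_int_one[OF mono e A, of 1] by simp

lemma usc_ind:
  fixes A :: "'a::t2_space set"
  assumes A: "compact A" and a: "a \<ge> 0"
  shows "usc_fun (\<lambda>x. a * indicator A x)"
  unfolding usc_fun_def
proof (intro conjI allI)
  show "\<And>x. 0 \<le> a * indicator A x" using a by simp
  have "range (\<lambda>x. a * indicator A x) \<subseteq> {0, a}" by (auto simp: indicator_def)
  then show "bounded (range (\<lambda>x. a * indicator A x))" by (rule bounded_subset[rotated]) simp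
  fix t :: real
  have cA: "closed A" using A by (simp add: compact_imp_closed)
  have "{x. a * indicator A x < t} = (if t \<le> 0 then {} else if t \<le> a then - A else UNIV)"
    using a by (auto simp: indicator_def)
  then show "open {x. a * indicator A x < t}" using cA by (simp add: open_Compl)
next
  have "{x. a * indicator A x \<noteq> (0::real)} \<subseteq> A" by (auto simp: indicator_def)
  then have c: "closure {x. a * indicator A x \<noteq> (0::real)} \<subseteq> A"
    using A by (simp add: closure_minimal compact_imp_closed)
  then show "compact (closure {x. a * indicator A x \<noteq> (0::real)})"
  proof -
    have "compact (A \<inter> closure {x. a * indicator A x \<noteq> (0::real)})"
      using A by (intro compact_Int_closed) auto
    then show ?thesis using c by (simp add: Int_absorb1)
  qed
qed

lemma comon_ind:
  assumes "A \<subseteq> B" "a \<ge> 0" "b \<ge> 0"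
  shows "comonotone (\<lambda>x. a * indicator A x) (\<lambda>x. b * indicator B x :: real)"
  unfolding comonotone_def using assms by (auto simp: indicator_def)

lemma ufs_at: "unit_frechet_scale M Y a \<Longrightarrow> t > 0 \<Longrightarrow>
   measure M {\<omega>\<in>space M. Y \<omega> \<le> ennreal t} = exp (- a / t)"
  unfolding unit_frechet_scale_def by blast

lemma crsm_basic:
  assumes "CRSM M X" "\<omega> \<in> space M"
  shows "mono (X \<omega>)" "X \<omega> {} = 0" "\<And>K. compact K \<Longrightarrow> X \<omega> K < \<top>"
proof -
  have "random_sup_measure M X" using assms(1) unfolding CRSM_def max_stable_def by blast
  then have "sup_measure (X \<omega>)" using assms(2) by (rule rsm_sup)
  then show "mono (X \<omega>)" "X \<omega> {} = 0" "\<And>K. compact K \<Longrightarrow> X \<omega> K < \<top>"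
    unfolding sup_measure_def choquet_capacity_def by auto
qed

lemma crsm_rsm: "CRSM M X \<Longrightarrow> random_sup_measure M X"
  unfolding CRSM_def max_stable_def by blast

lemma crsm_theta:
  assumes "CRSM M X" "compact K"
  shows "unit_frechet_scale M (\<lambda>\<omega>. X \<omega> K) (ext_coeff M X K)"
proof -
  have ms: "max_stable M X" using assms(1) unfolding CRSM_def by blast
  have H: "\<And>I KK u. finite (I::nat set) \<Longrightarrow> (\<forall>i\<in>I. compact (KK i) \<and> 0 \<le> u i) \<Longrightarrow> unit_frechet M (\<lambda>\<omega>. \<Squnion>i\<in>I. ennreal (u i) * X \<omega> (KK i))"
    using ms unfolding max_stable_def by blast
  have "unit_frechet M (\<lambda>\<omega>. SUP i\<in>{0::nat}. ennreal ((\<lambda>_. 1) i) * X \<omega> ((\<lambda>_. K) i))"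
    using H[of "{0}" "\<lambda>_. K" "\<lambda>_. 1"] assms(2) by simp
  then have "unit_frechet M (\<lambda>\<omega>. X \<omega> K)" by simp
  then have u: "unit_frechet_scale M (\<lambda>\<omega>. X \<omega> K) (frechet_scale M (\<lambda>\<omega>. X \<omega> K))"
    by (rule uf_scale)
  have "ext_coeff M X K = frechet_scale M (\<lambda>\<omega>. X \<omega> K)"
    unfolding ext_coeff_def tail_dep_def
    by (rule fs_eq[OF u], rule ext_int_ind[OF crsm_basic(1,2)[OF assms(1)] assms(2)])
  then show ?thesis using u by simp
qed

lemma crsm_joint:
  fixes X :: "'w \<Rightarrow> 'a::t2_space set \<Rightarrow> ennreal"
  assumes crsm: "CRSM M X" and A: "compact A" and B: "compact B" and AB: "A \<subseteq> B"
    and rs: "0 < r" "r < s"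
  shows "measure M {\<omega>\<in>space M. X \<omega> A \<le> ennreal r \<and> X \<omega> B \<le> ennreal s}
     = exp (- (ext_coeff M X A * (1/r - 1/s) + ext_coeff M X B * (1/s)))"
proof -
  define a where "a = 1/r - 1/s"
  define b where "b = 1/s"
  have a: "a > 0" using rs unfolding a_def by (simp add: field_simps)
  have b: "b > 0" using rs unfolding b_def by simp
  have ab: "a + b = 1 / r" unfolding a_def b_def by simp
  have ms: "max_stable M X" using crsm unfolding CRSM_def by blast
  define Z where "Z = (\<lambda>\<omega>. SUP i\<in>{0::nat, 1}. ennreal ((\<lambda>i. if i = 0 then a + b else b) i)
      * X \<omega> ((\<lambda>i. if i = 0 then A else B) i))"
  have H: "\<And>I KK u. finite (I::nat set) \<Longrightarrow> (\<forall>i\<in>I. compact (KK i) \<and> 0 \<le> u i) \<Longrightarrow> unit_frechet M (\<lambda>\<omega>. \<Squnion>i\<in>I. ennreal (u i) * X \<omega> (KK i))"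
    using ms unfolding max_stable_def by blast
  have "unit_frechet M Z"
    unfolding Z_def using A B a b by (intro H) auto
  then have uZ: "unit_frechet_scale M Z (frechet_scale M Z)" by (rule uf_scale)
  have Zeq: "Z \<omega> = max (ennreal (a + b) * X \<omega> A) (ennreal b * X \<omega> B)" for \<omega>
    unfolding Z_def by (simp add: sup_max del: ennreal_plus)
  define f where "f = (\<lambda>x. a * indicator A x :: real)"
  define g where "g = (\<lambda>x. b * indicator B x :: real)"
  have "tail_dep M X (\<lambda>x. f x + g x) = tail_dep M X f + tail_dep M X g"
    using crsm usc_ind[OF A] usc_ind[OF B] comon_ind[OF AB] a b unfolding CRSM_def f_def g_def
    by auto
  moreover have "tail_dep M X (\<lambda>x. f x + g x) = frechet_scale M Z"
    unfolding tail_dep_def f_def g_def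
  proof (rule fs_eq[OF uZ])
    fix \<omega> assume w: "\<omega> \<in> space M"
    show "extremal_integral (\<lambda>x. a * indicator A x + b * indicator B x) (X \<omega>) = Z \<omega>"
      unfolding Zeq using a b
      by (subst ext_int_two[OF crsm_basic(1,2)[OF crsm w] AB A B])
        (auto simp del: ennreal_plus simp: mult.commute[of "X \<omega> A"] mult.commute[of "X \<omega> B"])
  qed
  moreover have "tail_dep M X f = a * ext_coeff M X A"
    unfolding tail_dep_def f_def
    by (rule fs_eq[OF ufs_mult[OF a crsm_theta[OF crsm A]]])
       (simp add: ext_int_one[OF crsm_basic(1,2)[OF crsm] A] a less_imp_le mult.commute)
  moreover have "tail_dep M X g = b * ext_coeff M X B"
    unfolding tail_dep_def g_def
    by (rule fs_eq[OF ufs_mult[OF b crsm_theta[OF crsm B]]])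
       (simp add: ext_int_one[OF crsm_basic(1,2)[OF crsm] B] b less_imp_le mult.commute)
  ultimately have sc: "frechet_scale M Z = ext_coeff M X A * a + ext_coeff M X B * b"
    by simp
  have "{\<omega>\<in>space M. X \<omega> A \<le> ennreal r \<and> X \<omega> B \<le> ennreal s} = {\<omega>\<in>space M. Z \<omega> \<le> ennreal 1}"
    using ennreal_mult_le_iff_div[of "a+b" 1] ennreal_mult_le_iff_div[of b 1] a b ab rs
    unfolding Zeq b_def by (auto simp del: ennreal_plus)
  also have "measure M \<dots> = exp (- frechet_scale M Z / 1)"
    using ufs_at[OF uZ, of 1] by simp
  finally show ?thesis using sc unfolding a_def b_def by simp
qed


lemma less_enn2realI: "ennreal r < x \<Longrightarrow> x < top \<Longrightarrow> 0 \<le> r \<Longrightarrow> r < enn2real x"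
  by (cases x rule: ennreal_cases) (auto simp: ennreal_less_iff)

lemma exp_key:
  fixes t2 t12 r s \<epsilon> :: real
  assumes t2: "0 \<le> t2" and t12: "t2 \<le> t12" and r: "0 < r" "r \<le> s" and e: "0 < \<epsilon>" "\<epsilon> \<le> s"
  shows "exp (- (t12 - t2) / \<epsilon>) * exp (- t2 / r) + (exp (- t12 / s) - exp (- (t2 * (1/r - 1/s) + t12 * (1/s))))
     \<ge> exp (- (t12 - t2) / \<epsilon>) * exp (- t2 / s)"
proof -
  define q where "q = exp (- (t12 - t2) / s)"
  define c where "c = exp (- (t12 - t2) / \<epsilon>)"
  have s: "s > 0" using r by simp
  have q1: "exp (- t12 / s) = q * exp (- t2 / s)"
    unfolding q_def exp_add[symmetric] using s by (simp add: field_simps)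
  have q2: "exp (- (t2 * (1/r - 1/s) + t12 * (1/s))) = q * exp (- t2 / r)"
    unfolding q_def exp_add[symmetric] using s r by (simp add: field_simps)
  have "(t12 - t2) / s \<le> (t12 - t2) / \<epsilon>"
    using t12 e by (intro divide_left_mono) auto
  then have "(- (t12 - t2)) / \<epsilon> \<le> (- (t12 - t2)) / s"
    by (metis divide_minus_left neg_le_iff_le)
  then have qc: "c \<le> q" unfolding q_def c_def by simp
  have "t2 / s \<le> t2 / r" using t2 r by (intro divide_left_mono) auto
  then have ee: "exp (- t2 / r) \<le> exp (- t2 / s)" by simp
  have "0 \<le> (q - c) * (exp (- t2 / s) - exp (- t2 / r))"
    using qc ee by simp
  then show ?thesis unfolding q1 q2 c_def[symmetric] by (simp add: algebra_simps)
qed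

lemma part1:
  fixes X :: "'w \<Rightarrow> 'a::t2_space set \<Rightarrow> ennreal"
  assumes crsm: "CRSM M X" and K1: "compact K1" and K2: "compact K2" and e: "\<epsilon> > 0"
  shows "measure M {\<omega>\<in>space M. enn2real (X \<omega> K1) - enn2real (X \<omega> K2) \<le> \<epsilon>}
     \<ge> exp (- (ext_coeff M X (K1 \<union> K2) - ext_coeff M X K2) / \<epsilon>)"
proof -
  interpret prob_space M using crsm_rsm[OF crsm] unfolding random_sup_measure_def by blast
  define B where "B = K1 \<union> K2"
  have B: "compact B" using K1 K2 B_def by auto
  have K1B: "K1 \<subseteq> B" and K2B: "K2 \<subseteq> B" unfolding B_def by auto
  define t2 where "t2 = ext_coeff M X K2"
  define t12 where "t12 = ext_coeff M X B"
  define c where "c = exp (- (t12 - t2) / \<epsilon>)"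
  note [measurable] = rsm_meas[OF crsm_rsm[OF crsm] K1] rsm_meas[OF crsm_rsm[OF crsm] K2]
     rsm_meas[OF crsm_rsm[OF crsm] B]
  have mX: "X \<omega> S \<le> X \<omega> T" if "\<omega> \<in> space M" "S \<subseteq> T" for \<omega> S T
    using crsm_basic(1)[OF crsm that(1)] that(2) by (simp add: mono_def)
  have fin: "X \<omega> K < top" if "\<omega> \<in> space M" "compact K" for \<omega> K
    using crsm_basic(3)[OF crsm that] .
  have u2: "unit_frechet_scale M (\<lambda>\<omega>. X \<omega> K2) t2" using crsm_theta[OF crsm K2] t2_def by simp
  have u12: "unit_frechet_scale M (\<lambda>\<omega>. X \<omega> B) t12" using crsm_theta[OF crsm B] t12_def by simp
  have t2: "t2 \<ge> 0" using u2 unfolding unit_frechet_scale_def by simp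
  have "measure M {\<omega>\<in>space M. X \<omega> B \<le> ennreal 1} \<le> measure M {\<omega>\<in>space M. X \<omega> K2 \<le> ennreal 1}"
    by (rule finite_measure_mono) (use mX[OF _ K2B] in \<open>auto intro: order_trans\<close>)
  then have "exp (- t12 / 1) \<le> exp (- t2 / 1)"
    using ufs_at[OF u12, of 1] ufs_at[OF u2, of 1] by simp
  then have t12: "t2 \<le> t12" by simp
  define T where "T = {\<omega>\<in>space M. enn2real (X \<omega> K1) - enn2real (X \<omega> K2) \<le> \<epsilon>}"
  have Tm[measurable]: "T \<in> sets M" unfolding T_def by measurable
  define S where "S m = {\<omega>\<in>space M. X \<omega> K2 \<le> ennreal (real (Suc m) * \<epsilon>)}" for m
  have Sm[measurable]: "S m \<in> sets M" for m unfolding S_def by measurable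
  have claim: "c * exp (- t2 / (real (Suc m) * \<epsilon>)) \<le> measure M (T \<inter> S m)" for m
  proof (induction m)
    case 0
    have "{\<omega>\<in>space M. X \<omega> B \<le> ennreal \<epsilon>} \<subseteq> T \<inter> S 0"
    proof
      fix \<omega> assume w: "\<omega> \<in> {\<omega>\<in>space M. X \<omega> B \<le> ennreal \<epsilon>}"
      then have w1: "\<omega> \<in> space M" and wB: "X \<omega> B \<le> ennreal \<epsilon>" by auto
      have "X \<omega> K1 \<le> ennreal \<epsilon>" using mX[OF w1 K1B] wB by (rule order_trans)
      then have "enn2real (X \<omega> K1) \<le> \<epsilon>" using e by (intro enn2real_leI) auto
      moreover have "X \<omega> K2 \<le> ennreal \<epsilon>" using mX[OF w1 K2B] wB by (rule order_trans)
      ultimately show "\<omega> \<in> T \<inter> S 0" using w1 unfolding T_def S_def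
        by (auto simp: enn2real_nonneg intro: order_trans[of _ "enn2real (X \<omega> K1)"])
    qed
    then have "measure M {\<omega>\<in>space M. X \<omega> B \<le> ennreal \<epsilon>} \<le> measure M (T \<inter> S 0)"
      by (intro finite_measure_mono) auto
    moreover have "measure M {\<omega>\<in>space M. X \<omega> B \<le> ennreal \<epsilon>} = exp (- t12 / \<epsilon>)"
      using ufs_at[OF u12 e] .
    moreover have "c * exp (- t2 / \<epsilon>) = exp (- t12 / \<epsilon>)"
      unfolding c_def exp_add[symmetric] using e by (simp add: field_simps)
    ultimately show ?case by simp
  next
    case (Suc m)
    define r where "r = real (Suc m) * \<epsilon>"
    define s where "s = real (Suc (Suc m)) * \<epsilon>"
    have em: "0 \<le> \<epsilon> * real m" using e by simp
    have r: "0 < r" "r < s" "s - r = \<epsilon>" "\<epsilon> \<le> s" using e em unfolding r_def s_def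
      by (auto simp: algebra_simps add_pos_nonneg)
    define J where "J = {\<omega>\<in>space M. X \<omega> K2 \<le> ennreal r \<and> X \<omega> B \<le> ennreal s}"
    define D where "D = {\<omega>\<in>space M. X \<omega> B \<le> ennreal s} - J"
    have Jm[measurable]: "J \<in> sets M" unfolding J_def by measurable
    have mD: "measure M D = exp (- t12 / s) - exp (- (t2 * (1/r - 1/s) + t12 * (1/s)))"
    proof -
      have sp: "0 < s" using r by simp
      have "measure M D = measure M {\<omega>\<in>space M. X \<omega> B \<le> ennreal s} - measure M J"
        unfolding D_def by (rule finite_measure_Diff) (auto simp: J_def)
      also have "measure M J = exp (- (t2 * (1/r - 1/s) + t12 * (1/s)))"
        unfolding J_def t2_def t12_def by (rule crsm_joint[OF crsm K2 B K2B r(1,2)])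
      also have "measure M {\<omega>\<in>space M. X \<omega> B \<le> ennreal s} = exp (- t12 / s)"
        by (rule ufs_at[OF u12 sp])
      finally show ?thesis .
    qed
    have disj: "(T \<inter> S m) \<inter> D = {}" unfolding D_def J_def S_def r_def by auto
    have sub: "(T \<inter> S m) \<union> D \<subseteq> T \<inter> S (Suc m)"
    proof
      fix \<omega> assume w: "\<omega> \<in> (T \<inter> S m) \<union> D"
      then have w1: "\<omega> \<in> space M" unfolding T_def D_def by auto
      show "\<omega> \<in> T \<inter> S (Suc m)"
      proof (cases "\<omega> \<in> D")
        case True
        then have wB: "X \<omega> B \<le> ennreal s" and wr: "ennreal r < X \<omega> K2"
          unfolding D_def J_def by auto
        have "X \<omega> K1 \<le> ennreal s" using mX[OF w1 K1B] wB by (rule order_trans)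
        then have a1: "enn2real (X \<omega> K1) \<le> s" using r by (intro enn2real_leI) auto
        have a2: "r < enn2real (X \<omega> K2)" using less_enn2realI[OF wr fin[OF w1 K2]] r by simp
        have "X \<omega> K2 \<le> ennreal s" using mX[OF w1 K2B] wB by (rule order_trans)
        then show ?thesis using w1 a1 a2 r unfolding T_def S_def s_def by auto
      next
        case False
        then have "\<omega> \<in> T" "X \<omega> K2 \<le> ennreal r" using w unfolding S_def r_def by auto
        moreover have "ennreal r \<le> ennreal s" using r by (intro ennreal_leI) auto
        ultimately show ?thesis using w1 unfolding S_def s_def by auto
      qed
    qed
    have "measure M (T \<inter> S m) + measure M D = measure M ((T \<inter> S m) \<union> D)"
      using disj unfolding D_def by (subst finite_measure_Union) auto
    also have "\<dots> \<le> measure M (T \<inter> S (Suc m))"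
      using sub by (intro finite_measure_mono) auto
    finally have "measure M (T \<inter> S m) + measure M D \<le> measure M (T \<inter> S (Suc m))" .
    moreover have "c * exp (- t2 / s) \<le> c * exp (- t2 / r) + measure M D"
      unfolding mD c_def using exp_key[OF t2 t12 r(1) _ e r(4)] r by simp
    ultimately show ?case using Suc.IH unfolding r_def s_def by simp
  qed
  have lim: "(\<lambda>m. c * exp (- t2 / (real (Suc m) * \<epsilon>))) \<longlonglongrightarrow> c * exp (- (t2 / \<epsilon>) * 0)"
  proof -
    have "(\<lambda>m. c * exp (- (t2 / \<epsilon>) * inverse (real (Suc m)))) \<longlonglongrightarrow> c * exp (- (t2 / \<epsilon>) * 0)"
      by (intro tendsto_intros LIMSEQ_inverse_real_of_nat)
    moreover have "(\<lambda>m. c * exp (- (t2 / \<epsilon>) * inverse (real (Suc m))))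
        = (\<lambda>m. c * exp (- t2 / (real (Suc m) * \<epsilon>)))"
      by (auto simp: field_simps)
    ultimately show ?thesis by simp
  qed
  have "c \<le> measure M T"
  proof -
    have "\<forall>m\<ge>0. c * exp (- t2 / (real (Suc m) * \<epsilon>)) \<le> measure M T"
      using claim order_trans finite_measure_mono[of "T \<inter> S _" T] by (meson Int_lower1 Tm)
    then show ?thesis using LIMSEQ_le_const2[OF lim] by auto
  qed
  then show ?thesis unfolding c_def T_def t2_def t12_def B_def .
qed


theorem mainTheorem16:
  fixes M :: "'w measure"
    and X :: "'w \<Rightarrow> 'a::{t2_space, second_countable_topology} set \<Rightarrow> ennreal"
  assumes "locally_compact_space (euclidean :: 'a topology)"
    and "CRSM M X"
    and "compact K1" and "compact K2"
    and "(\<epsilon>::real) > 0"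
  shows "measure M {\<omega>\<in>space M. enn2real (X \<omega> K1) - enn2real (X \<omega> K2) \<le> \<epsilon>}
           \<ge> exp (- (ext_coeff M X (K1 \<union> K2) - ext_coeff M X K2) / \<epsilon>) \<and>
         measure M {\<omega>\<in>space M. \<bar>enn2real (X \<omega> K1) - enn2real (X \<omega> K2)\<bar> > \<epsilon>}
           \<le> (2 * ext_coeff M X (K1 \<union> K2) - ext_coeff M X K1 - ext_coeff M X K2) / \<epsilon>"
proof -
  note crsm = assms(2) and K1 = assms(3) and K2 = assms(4) and e = assms(5)
  interpret prob_space M using crsm_rsm[OF crsm] unfolding random_sup_measure_def by blast
  note [measurable] = rsm_meas[OF crsm_rsm[OF crsm] K1] rsm_meas[OF crsm_rsm[OF crsm] K2]
  define T1 where "T1 = {\<omega>\<in>space M. enn2real (X \<omega> K1) - enn2real (X \<omega> K2) \<le> \<epsilon>}"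
  define T2 where "T2 = {\<omega>\<in>space M. enn2real (X \<omega> K2) - enn2real (X \<omega> K1) \<le> \<epsilon>}"
  have T1m[measurable]: "T1 \<in> sets M" unfolding T1_def by measurable
  have T2m[measurable]: "T2 \<in> sets M" unfolding T2_def by measurable
  define x1 where "x1 = (ext_coeff M X (K1 \<union> K2) - ext_coeff M X K2) / \<epsilon>"
  define x2 where "x2 = (ext_coeff M X (K1 \<union> K2) - ext_coeff M X K1) / \<epsilon>"
  have p1: "exp (- x1) \<le> measure M T1"
  proof -
    have "- x1 = (- (ext_coeff M X (K1 \<union> K2) - ext_coeff M X K2)) / \<epsilon>"
      by (simp only: x1_def divide_minus_left)
    then show ?thesis using part1[OF crsm K1 K2 e] unfolding T1_def by metis
  qed
  have p2: "exp (- x2) \<le> measure M T2"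
  proof -
    have "- x2 = (- (ext_coeff M X (K2 \<union> K1) - ext_coeff M X K1)) / \<epsilon>"
      by (simp only: x2_def divide_minus_left Un_commute)
    then show ?thesis using part1[OF crsm K2 K1 e] unfolding T2_def by metis
  qed
  have "measure M {\<omega>\<in>space M. \<bar>enn2real (X \<omega> K1) - enn2real (X \<omega> K2)\<bar> > \<epsilon>}
      \<le> measure M ((space M - T1) \<union> (space M - T2))"
    by (rule finite_measure_mono) (auto simp: T1_def T2_def)
  also have "\<dots> \<le> measure M (space M - T1) + measure M (space M - T2)"
    by (rule measure_Un_le) auto
  also have "\<dots> = (1 - measure M T1) + (1 - measure M T2)"
    using prob_compl[OF T1m] prob_compl[OF T2m] by simp
  also have "\<dots> \<le> x1 + x2"
    using p1 p2 exp_ge_add_one_self[of "- x1"] exp_ge_add_one_self[of "- x2"] by linarith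
  also have "x1 + x2 = (2 * ext_coeff M X (K1 \<union> K2) - ext_coeff M X K1 - ext_coeff M X K2) / \<epsilon>"
    unfolding x1_def x2_def using e by (simp add: field_simps)
  finally show ?thesis using part1[OF crsm K1 K2 e] by simp
qed

end
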